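(* Let $(\Omega,\mathcal{A},\mu)$ be a $\sigma$-finite measure space, decomposed as a disjoint union $\Omega=\Omega_d\cup\Omega_a$ with $\Omega_d,\Omega_a\in\mathcal{A}$, where the restriction of $\mu$ to $\Omega_d$ is diffuse and $\Omega_a=\bigcup_{n\in\mathbb{N}}B_n$ is the union of a disjoint sequence $(B_n)_{n\in\mathbb{N}}$ of atoms. Let $u\in L_\infty(\mu)$ and let $M_u$ be the multiplication operator $M_uf:=uf$ on $L_1(\mu)$. Then \[ \|M_u\|_{e}=\max\Bigl\{\|u|_{\Omega_d}\|_\infty,\ \limsup_{n\to\infty}|u(B_n)|\Bigr\}, \] where $\|M_u\|_{e}:=\inf\{\|M_u+K\| : K \text{ a compact operator on } L_1(\mu)\}$.
   Context: A measure restricted to $\Omega_d$ is diffuse if every measurable $A\subseteq\Omega_d$ with $\mu(A)>0$ contains a measurable $A'$ with $0<\mu(A')<\mu(A)$. A measurable set $B$ is an atom if every measurable subset $B'\subseteq B$ satisfies $\mu(B')\in\{0,\mu(B)\}$. For each $n$, $u(B_n)$ denotes the a.e.-constant value of $u$ on $B_n$; if $\mu(B_n)=0$, the convention $u(B_n):=0$ is used. $\|u|_{\Omega_d}\|_\infty$ is the $L_\infty$-norm of the restriction of $u$ to $\Omega_d$. *)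

theory Defs
  imports "HOL-Probability.Probability"
begin

definition L1norm :: "'a measure \<Rightarrow> ('a \<Rightarrow> real) \<Rightarrow> real" where
  "L1norm M f = integral\<^sup>L M (\<lambda>x. \<bar>f x\<bar>)"

text \<open>Bounded linear operators on L_1(M), acting on representatives and
  respecting equality almost everywhere.\<close>
definition L1_operator :: "'a measure \<Rightarrow> (('a \<Rightarrow> real) \<Rightarrow> ('a \<Rightarrow> real)) \<Rightarrow> bool" where
  "L1_operator M T \<longleftrightarrow>
     (\<forall>f. integrable M f \<longrightarrow> integrable M (T f)) \<and>
     (\<forall>f g. integrable M f \<longrightarrow> integrable M g \<longrightarrow> (AE x in M. f x = g x) \<longrightarrow>
            (AE x in M. T f x = T g x)) \<and>
     (\<forall>f g. integrable M f \<longrightarrow> integrable M g \<longrightarrow>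
            (AE x in M. T (\<lambda>y. f y + g y) x = T f x + T g x)) \<and>
     (\<forall>c f. integrable M f \<longrightarrow> (AE x in M. T (\<lambda>y. c * f y) x = c * T f x)) \<and>
     (\<exists>C. \<forall>f. integrable M f \<longrightarrow> L1norm M (T f) \<le> C * L1norm M f)"

text \<open>Compact operator: the image of the closed unit ball is relatively compact,
  i.e. (L_1 being complete) totally bounded.\<close>
definition compact_L1_operator :: "'a measure \<Rightarrow> (('a \<Rightarrow> real) \<Rightarrow> ('a \<Rightarrow> real)) \<Rightarrow> bool" where
  "compact_L1_operator M K \<longleftrightarrow> L1_operator M K \<and>
     (\<forall>e>0. \<exists>G. finite G \<and> (\<forall>g\<in>G. integrable M g) \<and>
        (\<forall>f. integrable M f \<and> L1norm M f \<le> 1 \<longrightarrow>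
             (\<exists>g\<in>G. L1norm M (\<lambda>x. K f x - g x) < e)))"

definition L1_opnorm :: "'a measure \<Rightarrow> (('a \<Rightarrow> real) \<Rightarrow> ('a \<Rightarrow> real)) \<Rightarrow> real" where
  "L1_opnorm M T = Sup {L1norm M (T f) | f. integrable M f \<and> L1norm M f \<le> 1}"

definition L1_essnorm :: "'a measure \<Rightarrow> (('a \<Rightarrow> real) \<Rightarrow> ('a \<Rightarrow> real)) \<Rightarrow> real" where
  "L1_essnorm M T = Inf {L1_opnorm M (\<lambda>f x. T f x + K f x) | K. compact_L1_operator M K}"

definition mult_op :: "('a \<Rightarrow> real) \<Rightarrow> ('a \<Rightarrow> real) \<Rightarrow> ('a \<Rightarrow> real)" where
  "mult_op u f = (\<lambda>x. u x * f x)"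

definition diffuse_on :: "'a measure \<Rightarrow> 'a set \<Rightarrow> bool" where
  "diffuse_on M D \<longleftrightarrow> (\<forall>A\<in>sets M. A \<subseteq> D \<longrightarrow> 0 < emeasure M A \<longrightarrow>
     (\<exists>A'\<in>sets M. A' \<subseteq> A \<and> 0 < emeasure M A' \<and> emeasure M A' < emeasure M A))"

definition is_atom :: "'a measure \<Rightarrow> 'a set \<Rightarrow> bool" where
  "is_atom M B \<longleftrightarrow> B \<in> sets M \<and>
     (\<forall>B'\<in>sets M. B' \<subseteq> B \<longrightarrow> emeasure M B' = 0 \<or> emeasure M B' = emeasure M B)"

definition atom_val :: "'a measure \<Rightarrow> ('a \<Rightarrow> real) \<Rightarrow> 'a set \<Rightarrow> real" where
  "atom_val M u B = (if emeasure M B = 0 then 0 else (THE c. AE x in M. x \<in> B \<longrightarrow> u x = c))"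

text \<open>L_infinity norm of the restriction of u to D (0 if D is null).\<close>
definition Linf_norm_on :: "'a measure \<Rightarrow> 'a set \<Rightarrow> ('a \<Rightarrow> real) \<Rightarrow> ereal" where
  "Linf_norm_on M D u = max 0 (esssup (restrict_space M D) (\<lambda>x. ereal \<bar>u x\<bar>))"

end

theory Submission
  imports Defs
begin

lemma atom_finite:
  assumes sf: "sigma_finite_measure M" and at: "is_atom M B"
  shows "emeasure M B < \<infinity>"
proof -
  from sigma_finite_measure.sigma_finite_countable[OF sf] obtain A where
    A: "countable A" "A \<subseteq> sets M" "\<Union>A = space M" "\<forall>a\<in>A. emeasure M a \<noteq> \<infinity>" by blast
  have Bs: "B \<in> sets M" using at unfolding is_atom_def by auto
  have BA: "B = (\<Union>a\<in>A. B \<inter> a)" using A(3) sets.sets_into_space[OF Bs] by auto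
  show ?thesis
  proof (cases "\<exists>a\<in>A. emeasure M (B \<inter> a) \<noteq> 0")
    case True
    then obtain a where a: "a \<in> A" "emeasure M (B \<inter> a) \<noteq> 0" by blast
    have "B \<inter> a \<in> sets M" using a A(2) Bs by auto
    then have "emeasure M (B \<inter> a) = emeasure M B" using at a(2) unfolding is_atom_def by auto
    moreover have "emeasure M (B \<inter> a) \<le> emeasure M a"
      using a A(2) by (intro emeasure_mono) auto
    moreover have "emeasure M a < \<infinity>" using A(4) a(1) by (simp add: less_top)
    ultimately show ?thesis by (metis order.strict_trans1)
  next
    case False
    then have "(\<Union>a\<in>A. B \<inter> a) \<in> null_sets M"
      using A Bs by (intro null_sets_UN') auto
    then have "emeasure M B = 0" using BA by (metis null_setsD1)
    then show ?thesis by simp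
  qed
qed

lemma atom_const:
  fixes f :: "'a \<Rightarrow> real"
  assumes at: "is_atom M B" and fin: "emeasure M B < \<infinity>" and f: "f \<in> borel_measurable M"
  shows "\<exists>c. AE x in M. x \<in> B \<longrightarrow> f x = c"
proof (cases "emeasure M B = 0")
  case True
  have Bs: "B \<in> sets M" using at unfolding is_atom_def by auto
  then have "AE x in M. x \<notin> B" using True AE_iff_null_sets by blast
  then show ?thesis by (auto elim: eventually_mono)
next
  case False
  have Bs: "B \<in> sets M" using at unfolding is_atom_def by auto
  define P where "P q = (AE x in M. x \<in> B \<longrightarrow> f x \<le> q)" for q
  define Q where "Q q = (AE x in M. x \<in> B \<longrightarrow> q < f x)" for q
  have notB: "\<not> (AE x in M. x \<notin> B)" using False AE_iff_null_sets[OF Bs] by auto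
  have PQ: "P q \<or> Q q" for q
  proof -
    define S where "S = {x\<in>space M. f x \<le> q} \<inter> B"
    have Ss: "S \<in> sets M" unfolding S_def using f Bs by measurable
    have "emeasure M S = 0 \<or> emeasure M S = emeasure M B"
      using at Ss unfolding is_atom_def S_def by auto
    then show ?thesis
    proof
      assume "emeasure M S = 0"
      then have "S \<in> null_sets M" using Ss by auto
      then have "AE x in M. x \<notin> S" using AE_iff_null_sets[OF Ss] by auto
      then have "Q q" unfolding Q_def using AE_space
        by eventually_elim (auto simp: S_def)
      then show ?thesis by simp
    next
      assume e: "emeasure M S = emeasure M B"
      have "emeasure M (B - S) = emeasure M B - emeasure M S"
        using Ss Bs fin e by (intro emeasure_Diff) (auto simp: S_def)
      then have "emeasure M (B - S) = 0" using e fin by simp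
      then have "AE x in M. x \<notin> B - S" using AE_iff_null_sets[of "B - S" M] Ss Bs by auto
      then have "P q" unfolding P_def using AE_space
        by eventually_elim (auto simp: S_def)
      then show ?thesis by simp
    qed
  qed
  have notPQ: "\<not> (P p \<and> Q q)" if "q \<ge> p" for p q
  proof
    assume "P p \<and> Q q"
    then have "AE x in M. x \<in> B \<longrightarrow> f x \<le> p" "AE x in M. x \<in> B \<longrightarrow> q < f x" unfolding P_def Q_def by auto
    then have "AE x in M. x \<notin> B" by eventually_elim (use that in auto)
    then show False using notB by simp
  qed
  have exP: "\<exists>p. P p"
  proof (rule ccontr)
    assume "\<not> (\<exists>p. P p)"
    then have "\<forall>n::nat. Q (real n)" using PQ by blast
    then have "AE x in M. \<forall>n::nat. x \<in> B \<longrightarrow> real n < f x" unfolding Q_def by (subst AE_all_countable) auto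
    then have "AE x in M. x \<notin> B"
      by eventually_elim (metis reals_Archimedean2 order.asym)
    then show False using notB by simp
  qed
  then obtain p0 where p0: "P p0" by blast
  have exQ: "\<exists>q. Q q"
  proof (rule ccontr)
    assume "\<not> (\<exists>q. Q q)"
    then have "\<forall>n::nat. P (- real n)" using PQ by blast
    then have "AE x in M. \<forall>n::nat. x \<in> B \<longrightarrow> f x \<le> - real n" unfolding P_def by (subst AE_all_countable) auto
    then have "AE x in M. x \<notin> B"
    proof eventually_elim
      case (elim x)
      obtain n::nat where "- f x < real n" using reals_Archimedean2 by blast
      then show ?case using elim[rule_format, of n] by linarith
    qed
    then show False using notB by simp
  qed
  have Qle: "q \<le> p0" if "Q q" for q
    using notPQ[of p0 q] p0 that by force
  have bdd: "bdd_above (Collect Q)" unfolding bdd_above_def using Qle by auto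
  define c where "c = Sup (Collect Q)"
  have Qmono: "Q q" if "Q q'" "q \<le> q'" for q q'
    using that unfolding Q_def by (auto elim: eventually_mono)
  have Pmono: "P q" if "P q'" "q' \<le> q" for q q'
    using that unfolding P_def by (auto elim: eventually_mono)
  have "\<forall>q\<in>\<rat>. AE x in M. x \<in> B \<longrightarrow> (q < c \<longrightarrow> q < f x) \<and> (c < q \<longrightarrow> f x \<le> q)"
  proof
    fix q :: real assume "q \<in> \<rat>"
    show "AE x in M. x \<in> B \<longrightarrow> (q < c \<longrightarrow> q < f x) \<and> (c < q \<longrightarrow> f x \<le> q)"
    proof (cases "q < c")
      case True
      then obtain q' where "Q q'" "q < q'" using less_cSup_iff[of "Collect Q" q] exQ bdd c_def by auto
      then have "Q q" using Qmono by auto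
      then show ?thesis unfolding Q_def using True by (auto elim: eventually_mono)
    next
      case False
      show ?thesis
      proof (cases "c < q")
        case True
        then have "\<not> Q q" using cSup_upper[OF _ bdd, of q] c_def by force
        then have "P q" using PQ by blast
        then show ?thesis unfolding P_def using False by (auto elim: eventually_mono)
      qed (use False in auto)
    qed
  qed
  then have "AE x in M. \<forall>q\<in>\<rat>. x \<in> B \<longrightarrow> (q < c \<longrightarrow> q < f x) \<and> (c < q \<longrightarrow> f x \<le> q)"
    by (subst AE_ball_countable[OF countable_rat]) auto
  then have "AE x in M. x \<in> B \<longrightarrow> f x = c"
  proof eventually_elim
    case (elim x)
    show ?case
    proof
      assume xB: "x \<in> B"
      show "f x = c"
      proof (rule ccontr)
        assume "f x \<noteq> c"
        then consider "f x < c" | "c < f x" by linarith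
        then show False
        proof cases
          case 1
          then obtain r where "r \<in> \<rat>" "f x < r" "r < c" using Rats_dense_in_real by blast
          then show False using elim xB by force
        next
          case 2
          then obtain r where "r \<in> \<rat>" "c < r" "r < f x" using Rats_dense_in_real by blast
          then show False using elim xB by force
        qed
      qed
    qed
  qed
  then show ?thesis by blast
qed

lemma atom_val_AE:
  assumes at: "is_atom M B" and fin: "emeasure M B < \<infinity>" and u: "u \<in> borel_measurable M"
  shows "AE x in M. x \<in> B \<longrightarrow> u x = atom_val M u B"
proof (cases "emeasure M B = 0")
  case True
  have Bs: "B \<in> sets M" using at unfolding is_atom_def by auto
  then have "AE x in M. x \<notin> B" using True AE_iff_null_sets by blast
  then show ?thesis by (auto elim: eventually_mono)
next
  case False
  have Bs: "B \<in> sets M" using at unfolding is_atom_def by auto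
  have notB: "\<not> (AE x in M. x \<notin> B)" using False AE_iff_null_sets[OF Bs] by auto
  obtain c where c: "AE x in M. x \<in> B \<longrightarrow> u x = c" using atom_const[OF at fin u] by blast
  have "(THE c. AE x in M. x \<in> B \<longrightarrow> u x = c) = c"
  proof (rule the_equality)
    fix d assume d: "AE x in M. x \<in> B \<longrightarrow> u x = d"
    show "d = c"
    proof (rule ccontr)
      assume "d \<noteq> c"
      with c d have "AE x in M. x \<notin> B" by (auto elim: eventually_elim2)
      then show False using notB by simp
    qed
  qed (rule c)
  then show ?thesis using c False unfolding atom_val_def by simp
qed

lemma L1norm_nonneg: "0 \<le> L1norm M f"
  unfolding L1norm_def by (rule integral_nonneg_AE) auto

lemma L1norm_add_le:
  assumes "integrable M f" "integrable M g"
  shows "L1norm M (\<lambda>x. f x + g x) \<le> L1norm M f + L1norm M g"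
proof -
  have "L1norm M (\<lambda>x. f x + g x) \<le> integral\<^sup>L M (\<lambda>x. \<bar>f x\<bar> + \<bar>g x\<bar>)"
    unfolding L1norm_def using assms by (intro integral_mono) auto
  also have "\<dots> = L1norm M f + L1norm M g"
    unfolding L1norm_def using assms by (intro Bochner_Integration.integral_add) auto
  finally show ?thesis .
qed

lemma L1norm_diff_le:
  assumes "integrable M f" "integrable M g"
  shows "L1norm M (\<lambda>x. f x - g x) \<le> L1norm M f + L1norm M g"
proof -
  have "L1norm M (\<lambda>x. f x - g x) \<le> integral\<^sup>L M (\<lambda>x. \<bar>f x\<bar> + \<bar>g x\<bar>)"
    unfolding L1norm_def using assms by (intro integral_mono) auto
  also have "\<dots> = L1norm M f + L1norm M g"
    unfolding L1norm_def using assms by (intro Bochner_Integration.integral_add) auto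
  finally show ?thesis .
qed

lemma L1norm_cong_AE:
  assumes "f \<in> borel_measurable M" "g \<in> borel_measurable M" "AE x in M. f x = g x"
  shows "L1norm M f = L1norm M g"
  unfolding L1norm_def using assms by (intro integral_cong_AE) (auto elim: eventually_mono)

lemma L1norm_cmult: "L1norm M (\<lambda>x. c * f x) = \<bar>c\<bar> * L1norm M f"
  unfolding L1norm_def by (simp add: abs_mult integral_mult_right_zero)

definition TB :: "'a measure \<Rightarrow> (('a \<Rightarrow> real) \<Rightarrow> ('a \<Rightarrow> real)) \<Rightarrow> bool" where
  "TB M K \<longleftrightarrow> (\<forall>e>0. \<exists>G. finite G \<and> (\<forall>g\<in>G. integrable M g) \<and>
        (\<forall>f. integrable M f \<and> L1norm M f \<le> 1 \<longrightarrow>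
             (\<exists>g\<in>G. L1norm M (\<lambda>x. K f x - g x) < e)))"

lemma TB_zero: "TB M (\<lambda>f x. 0)"
  unfolding TB_def L1norm_def
  by (intro allI impI exI[of _ "{\<lambda>x. 0}"]) auto

lemma TB_add:
  assumes "TB M K1" "TB M K2"
    and i1: "\<And>f. integrable M f \<Longrightarrow> integrable M (K1 f)"
    and i2: "\<And>f. integrable M f \<Longrightarrow> integrable M (K2 f)"
  shows "TB M (\<lambda>f x. K1 f x + K2 f x)"
  unfolding TB_def
proof (intro allI impI)
  fix e :: real assume e: "0 < e"
  obtain G1 where G1: "finite G1" "\<forall>g\<in>G1. integrable M g"
    "\<forall>f. integrable M f \<and> L1norm M f \<le> 1 \<longrightarrow> (\<exists>g\<in>G1. L1norm M (\<lambda>x. K1 f x - g x) < e/2)"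
    using assms(1) e unfolding TB_def by (meson half_gt_zero)
  obtain G2 where G2: "finite G2" "\<forall>g\<in>G2. integrable M g"
    "\<forall>f. integrable M f \<and> L1norm M f \<le> 1 \<longrightarrow> (\<exists>g\<in>G2. L1norm M (\<lambda>x. K2 f x - g x) < e/2)"
    using assms(2) e unfolding TB_def by (meson half_gt_zero)
  define G where "G = (\<lambda>(g1, g2) x. g1 x + g2 x) ` (G1 \<times> G2)"
  show "\<exists>G. finite G \<and> (\<forall>g\<in>G. integrable M g) \<and>
        (\<forall>f. integrable M f \<and> L1norm M f \<le> 1 \<longrightarrow>
             (\<exists>g\<in>G. L1norm M (\<lambda>x. K1 f x + K2 f x - g x) < e))"
  proof (intro exI[of _ G] conjI allI impI ballI)
    show "finite G" unfolding G_def using G1 G2 by auto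
    show "integrable M g" if "g \<in> G" for g
      using that G1 G2 unfolding G_def by auto
    fix f assume f: "integrable M f \<and> L1norm M f \<le> 1"
    obtain g1 where g1: "g1 \<in> G1" "L1norm M (\<lambda>x. K1 f x - g1 x) < e/2" using G1 f by blast
    obtain g2 where g2: "g2 \<in> G2" "L1norm M (\<lambda>x. K2 f x - g2 x) < e/2" using G2 f by blast
    have "L1norm M (\<lambda>x. K1 f x + K2 f x - (g1 x + g2 x)) =
          L1norm M (\<lambda>x. (K1 f x - g1 x) + (K2 f x - g2 x))"
      by (simp add: algebra_simps)
    also have "\<dots> \<le> L1norm M (\<lambda>x. K1 f x - g1 x) + L1norm M (\<lambda>x. K2 f x - g2 x)"
      using i1 i2 f g1 g2 G1 G2 by (intro L1norm_add_le) auto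
    also have "\<dots> < e" using g1 g2 by simp
    finally show "\<exists>g\<in>G. L1norm M (\<lambda>x. K1 f x + K2 f x - g x) < e"
      using g1 g2 unfolding G_def by (intro bexI[of _ "\<lambda>x. g1 x + g2 x"]) auto
  qed
qed

lemma TB_sum:
  assumes "\<And>n. TB M (Kn n)" "\<And>n f. integrable M f \<Longrightarrow> integrable M (Kn n f)"
  shows "TB M (\<lambda>f x. \<Sum>n<(N::nat). Kn n f x)"
proof (induction N)
  case 0
  then show ?case using TB_zero by simp
next
  case (Suc N)
  have "TB M (\<lambda>f x. (\<Sum>n<N. Kn n f x) + Kn N f x)"
    using Suc assms by (intro TB_add) auto
  then show ?case by simp
qed

lemma TB_atom:
  fixes u :: "'a \<Rightarrow> real"
  assumes at: "is_atom M B" and fin: "emeasure M B < \<infinity>" and u[measurable]: "u \<in> borel_measurable M"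
  shows "TB M (\<lambda>f x. - (indicator B x * u x * f x))"
proof -
  have Bs[measurable]: "B \<in> sets M" using at unfolding is_atom_def by auto
  show ?thesis
  proof (cases "emeasure M B = 0")
    case True
    then have nB: "AE x in M. x \<notin> B" using AE_iff_null_sets[OF Bs] by auto
    show ?thesis unfolding TB_def
    proof (intro allI impI)
      fix e :: real assume e: "0 < e"
      show "\<exists>G. finite G \<and> (\<forall>g\<in>G. integrable M g) \<and>
          (\<forall>f. integrable M f \<and> L1norm M f \<le> 1 \<longrightarrow>
            (\<exists>g\<in>G. L1norm M (\<lambda>x. - (indicator B x * u x * f x) - g x) < e))"
      proof (intro exI[of _ "{\<lambda>x. 0}"] conjI allI impI)
        fix f assume f: "integrable M f \<and> L1norm M f \<le> 1"
        then have [measurable]: "f \<in> borel_measurable M" by auto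
        have "L1norm M (\<lambda>x. - (indicator B x * u x * f x) - 0) = L1norm M (\<lambda>x. 0)"
          by (rule L1norm_cong_AE) (use nB in \<open>auto elim: eventually_mono\<close>)
        then show "\<exists>g\<in>{\<lambda>x. 0}. L1norm M (\<lambda>x. - (indicator B x * u x * f x) - g x) < e"
          using e by (simp add: L1norm_def)
      qed auto
    qed
  next
    case False
    define \<beta> where "\<beta> = measure M B"
    have eB: "emeasure M B = ennreal \<beta>" unfolding \<beta>_def using fin by (simp add: emeasure_eq_ennreal_measure less_top)
    have \<beta>pos: "0 < \<beta>" using False eB
      by (metis \<beta>_def ennreal_0 measure_nonneg order_le_less)
    define v where "v = atom_val M u B"
    have uv: "AE x in M. x \<in> B \<longrightarrow> u x = v" unfolding v_def by (rule atom_val_AE[OF at fin u])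
    define R where "R = 1 / \<beta>"
    show ?thesis unfolding TB_def
    proof (intro allI impI)
      fix e :: real assume e: "0 < e"
      define \<delta> where "\<delta> = e / ((\<bar>v\<bar> + 1) * (\<beta> + 1))"
      have \<delta>pos: "0 < \<delta>" unfolding \<delta>_def using e \<beta>pos by (simp add: add_pos_nonneg)
      obtain C where C: "C \<subseteq> {-R..R}" "finite C" "{-R..R} \<subseteq> (\<Union>t\<in>C. ball t \<delta>)"
        using compactE_image[OF compact_Icc[of "-R" R], of "{-R..R}" "\<lambda>t. ball t \<delta>"] \<delta>pos
        by (metis (no_types, lifting) UN_iff centre_in_ball open_ball subsetI)
      define G where "G = (\<lambda>t x. - v * t * indicator B x) ` C"
      show "\<exists>G. finite G \<and> (\<forall>g\<in>G. integrable M g) \<and>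
          (\<forall>f. integrable M f \<and> L1norm M f \<le> 1 \<longrightarrow>
            (\<exists>g\<in>G. L1norm M (\<lambda>x. - (indicator B x * u x * f x) - g x) < e))"
      proof (intro exI[of _ G] conjI allI impI ballI)
        show "finite G" unfolding G_def using C by auto
        show "integrable M g" if "g \<in> G" for g
          using that unfolding G_def using integrable_real_indicator[OF Bs fin] by auto
        fix f assume f: "integrable M f \<and> L1norm M f \<le> 1"
        then have fm[measurable]: "f \<in> borel_measurable M" by auto
        obtain a where a: "AE x in M. x \<in> B \<longrightarrow> f x = a" using atom_const[OF at fin fm] by blast
        have "\<bar>a\<bar> * \<beta> = integral\<^sup>L M (\<lambda>x. \<bar>a\<bar> * indicator B x)"
          using Bs by (simp add: integral_mult_right_zero \<beta>_def)
        also have "\<dots> \<le> L1norm M f" unfolding L1norm_def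
          using f integrable_real_indicator[OF Bs fin]
          by (intro integral_mono_AE) (auto intro!: eventually_mono[OF a] split: split_indicator)
        finally have "\<bar>a\<bar> * \<beta> \<le> 1" using f by simp
        then have "\<bar>a\<bar> \<le> R" unfolding R_def using \<beta>pos by (simp add: field_simps)
        then have "a \<in> {-R..R}" by auto
        then obtain t where t: "t \<in> C" "dist t a < \<delta>" using C(3) by (auto simp: mem_ball)
        have "L1norm M (\<lambda>x. - (indicator B x * u x * f x) - (- v * t * indicator B x)) =
              L1norm M (\<lambda>x. (\<bar>v\<bar> * \<bar>a - t\<bar>) * indicator B x)"
          unfolding L1norm_def
          by (intro integral_cong_AE) (auto intro!: eventually_mono[OF eventually_conj[OF a uv]]
                 simp: abs_mult split: split_indicator, metis abs_minus_commute abs_mult left_diff_distrib mult.commute)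
        also have "\<dots> = (\<bar>v\<bar> * \<bar>a - t\<bar>) * \<beta>"
          unfolding L1norm_def using Bs by (simp add: integral_mult_right_zero \<beta>_def)
        also have "\<dots> \<le> (\<bar>v\<bar> * \<delta>) * \<beta>"
          using t \<beta>pos by (intro mult_right_mono mult_left_mono) (auto simp: dist_real_def)
        also have "\<dots> < e"
        proof -
          have "(\<bar>v\<bar> * \<delta>) * \<beta> = e * (\<bar>v\<bar> * \<beta>) / ((\<bar>v\<bar> + 1) * (\<beta> + 1))"
            unfolding \<delta>_def by simp
          also have "\<dots> < e * 1"
            using e \<beta>pos by (subst pos_divide_less_eq) (auto intro!: mult_strict_left_mono mult_strict_mono simp: add_pos_nonneg)
          finally show ?thesis by simp
        qed
        finally show "\<exists>g\<in>G. L1norm M (\<lambda>x. - (indicator B x * u x * f x) - g x) < e"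
          using t unfolding G_def by (intro bexI[of _ "\<lambda>x. - v * t * indicator B x"]) auto
      qed
    qed
  qed
qed

lemma L1_opD:
  assumes "L1_operator M T"
  shows L1_op_int: "\<And>f. integrable M f \<Longrightarrow> integrable M (T f)"
    and L1_op_cong: "\<And>f g. integrable M f \<Longrightarrow> integrable M g \<Longrightarrow> (AE x in M. f x = g x) \<Longrightarrow>
            (AE x in M. T f x = T g x)"
    and L1_op_add: "\<And>f g. integrable M f \<Longrightarrow> integrable M g \<Longrightarrow>
            (AE x in M. T (\<lambda>y. f y + g y) x = T f x + T g x)"
    and L1_op_mult: "\<And>c f. integrable M f \<Longrightarrow> (AE x in M. T (\<lambda>y. c * f y) x = c * T f x)"
    and L1_op_bound: "\<exists>C. \<forall>f. integrable M f \<longrightarrow> L1norm M (T f) \<le> C * L1norm M f"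
  using assms unfolding L1_operator_def by simp_all

lemma aux_ineq1:
  fixes a b c :: real
  assumes "0 < b" "c \<le> \<bar>a\<bar>"
  shows "(1/2) * (c * (1/b) + c * 0) \<le> \<bar>a * ((1/2) * (1/b + (-1) * 0))\<bar>"
proof -
  have "\<bar>a * ((1/2) * (1/b + (-1) * 0))\<bar> = \<bar>a\<bar> / (2*b)" using assms(1) by (simp add: abs_mult)
  moreover have "(1/2) * (c * (1/b) + c * 0) = c / (2*b)" by simp
  moreover have "c / (2*b) \<le> \<bar>a\<bar> / (2*b)" using assms by (intro divide_right_mono) auto
  ultimately show ?thesis by linarith
qed

lemma aux_ineq2:
  fixes a b c :: real
  assumes "0 < b" "c \<le> \<bar>a\<bar>"
  shows "(1/2) * (c * 0 + c * (1/b)) \<le> \<bar>a * ((1/2) * (0 + (-1) * (1/b)))\<bar>"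
proof -
  have "\<bar>a * ((1/2) * (0 + (-1) * (1/b)))\<bar> = \<bar>a\<bar> / (2*b)" using assms(1) by (simp add: abs_mult)
  moreover have "(1/2) * (c * 0 + c * (1/b)) = c / (2*b)" by simp
  moreover have "c / (2*b) \<le> \<bar>a\<bar> / (2*b)" using assms by (intro divide_right_mono) auto
  ultimately show ?thesis by linarith
qed

lemma int_mult:
  fixes u :: "'a \<Rightarrow> real"
  assumes u: "u \<in> borel_measurable M" and ub: "AE x in M. \<bar>u x\<bar> \<le> C" and f: "integrable M f"
  shows "integrable M (\<lambda>x. u x * f x)" "L1norm M (\<lambda>x. u x * f x) \<le> max 0 C * L1norm M f"
proof -
  have fm: "f \<in> borel_measurable M" using f by auto
  have bd: "AE x in M. \<bar>u x * f x\<bar> \<le> max 0 C * \<bar>f x\<bar>"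
    using ub by eventually_elim (simp add: abs_mult mult_right_mono)
  have i1: "integrable M (\<lambda>x. max 0 C * f x)" using f by simp
  have m1: "(\<lambda>x. u x * f x) \<in> borel_measurable M" using u fm by simp
  have n1: "AE x in M. norm (u x * f x) \<le> norm (max 0 C * f x)"
    using bd by eventually_elim (simp add: abs_mult)
  show i: "integrable M (\<lambda>x. u x * f x)"
    by (rule Bochner_Integration.integrable_bound[OF i1 m1 n1])
  have i2: "integrable M (\<lambda>x. max 0 C * \<bar>f x\<bar>)" using f by simp
  have "L1norm M (\<lambda>x. u x * f x) \<le> integral\<^sup>L M (\<lambda>x. max 0 C * \<bar>f x\<bar>)"
    unfolding L1norm_def by (rule integral_mono_AE[OF integrable_abs[OF i] i2 bd])
  also have "\<dots> = max 0 C * L1norm M f" unfolding L1norm_def by (rule integral_mult_right_zero)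
  finally show "L1norm M (\<lambda>x. u x * f x) \<le> max 0 C * L1norm M f" .
qed

lemma opnorm_bdd:
  fixes u :: "'a \<Rightarrow> real"
  assumes u: "u \<in> borel_measurable M" and ub: "AE x in M. \<bar>u x\<bar> \<le> C" and K: "L1_operator M K"
  shows "bdd_above {L1norm M ((\<lambda>f x. mult_op u f x + K f x) f) | f. integrable M f \<and> L1norm M f \<le> 1}"
proof -
  obtain CK where CK: "\<And>f. integrable M f \<Longrightarrow> L1norm M (K f) \<le> CK * L1norm M f"
    using L1_op_bound[OF K] by blast
  note Ki = L1_op_int[OF K]
  show ?thesis unfolding bdd_above_def
  proof (intro exI[of _ "max 0 C + \<bar>CK\<bar>"] ballI)
    fix y assume "y \<in> {L1norm M ((\<lambda>f x. mult_op u f x + K f x) f) | f. integrable M f \<and> L1norm M f \<le> 1}"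
    then obtain f where f: "integrable M f" "L1norm M f \<le> 1" and y: "y = L1norm M (\<lambda>x. u x * f x + K f x)"
      unfolding mult_op_def by auto
    have "y \<le> L1norm M (\<lambda>x. u x * f x) + L1norm M (K f)"
      unfolding y using int_mult[OF u ub f(1)] Ki[OF f(1)] by (intro L1norm_add_le) auto
    also have "\<dots> \<le> max 0 C * L1norm M f + \<bar>CK\<bar> * L1norm M f"
      using int_mult(2)[OF u ub f(1)] CK[OF f(1)] L1norm_nonneg[of M f]
      by (smt (verit) mult_right_mono abs_ge_self)
    also have "\<dots> \<le> max 0 C * 1 + \<bar>CK\<bar> * 1"
      using f(2) L1norm_nonneg[of M f] by (intro add_mono mult_left_mono) auto
    finally show "y \<le> max 0 C + \<bar>CK\<bar>" by simp
  qed
qed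

lemma lower_bound:
  fixes u :: "'a \<Rightarrow> real" and A :: "nat \<Rightarrow> 'a set"
  assumes u[measurable]: "u \<in> borel_measurable M" and ub: "AE x in M. \<bar>u x\<bar> \<le> Cu"
    and As: "\<And>n. A n \<in> sets M" and disj: "disjoint_family A"
    and Apos: "\<And>n. 0 < emeasure M (A n)" and Afin: "\<And>n. emeasure M (A n) < \<infinity>"
    and Ac: "\<And>n. AE x in M. x \<in> A n \<longrightarrow> c \<le> \<bar>u x\<bar>"
    and K: "compact_L1_operator M K"
  shows "c \<le> L1_opnorm M (\<lambda>f x. mult_op u f x + K f x)"
proof -
  have KL: "L1_operator M K" using K unfolding compact_L1_operator_def by simp
  note Ki = L1_op_int[OF KL]
  note Kadd = L1_op_add[OF KL]
  note Kmult = L1_op_mult[OF KL]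
  let ?S = "{L1norm M ((\<lambda>f x. mult_op u f x + K f x) f) | f. integrable M f \<and> L1norm M f \<le> 1}"
  have bdd: "bdd_above ?S" by (rule opnorm_bdd[OF u ub KL])
  define \<beta> where "\<beta> n = measure M (A n)" for n
  have eA: "emeasure M (A n) = ennreal (\<beta> n)" for n
    unfolding \<beta>_def using Afin[of n] by (simp add: emeasure_eq_ennreal_measure less_top)
  have \<beta>pos: "0 < \<beta> n" for n using Apos[of n] eA[of n] by simp
  define fn where "fn n x = indicator (A n) x / \<beta> n" for n x
  have fn_int: "integrable M (fn n)" for n
    unfolding fn_def using integrable_real_indicator[OF As Afin] by auto
  have fn_meas[measurable]: "fn n \<in> borel_measurable M" for n using fn_int by auto
  have fn_nonneg: "0 \<le> fn n x" for n x unfolding fn_def using \<beta>pos[of n] by auto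
  have fn_integral: "integral\<^sup>L M (fn n) = 1" for n
    unfolding fn_def using As[of n] \<beta>pos[of n] by (simp add: \<beta>_def)
  have fn_norm: "L1norm M (fn n) = 1" for n
    unfolding L1norm_def using fn_nonneg fn_integral by simp
  show ?thesis
  proof (rule field_le_epsilon)
    fix \<epsilon> :: real assume \<epsilon>: "0 < \<epsilon>"
    have "\<forall>e>0. \<exists>G. finite G \<and> (\<forall>g\<in>G. integrable M g) \<and>
        (\<forall>f. integrable M f \<and> L1norm M f \<le> 1 \<longrightarrow> (\<exists>g\<in>G. L1norm M (\<lambda>x. K f x - g x) < e))"
      using K unfolding compact_L1_operator_def by simp
    then obtain G where G0: "finite G \<and> (\<forall>g\<in>G. integrable M g) \<and>
        (\<forall>f. integrable M f \<and> L1norm M f \<le> 1 \<longrightarrow> (\<exists>g\<in>G. L1norm M (\<lambda>x. K f x - g x) < \<epsilon>))"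
      using \<epsilon> by (elim allE impE exE) auto
    then have G: "finite G" "\<forall>g\<in>G. integrable M g"
      "\<forall>f. integrable M f \<and> L1norm M f \<le> 1 \<longrightarrow> (\<exists>g\<in>G. L1norm M (\<lambda>x. K f x - g x) < \<epsilon>)"
      by simp_all
    have "\<forall>n. \<exists>g. g \<in> G \<and> L1norm M (\<lambda>x. K (fn n) x - g x) < \<epsilon>"
    proof
      fix n
      have "\<exists>g\<in>G. L1norm M (\<lambda>x. K (fn n) x - g x) < \<epsilon>"
        using G(3) fn_int[of n] fn_norm[of n] by simp
      then show "\<exists>g. g \<in> G \<and> L1norm M (\<lambda>x. K (fn n) x - g x) < \<epsilon>" by (rule bexE) blast
    qed
    then obtain gs where gs0: "\<forall>n. gs n \<in> G \<and> L1norm M (\<lambda>x. K (fn n) x - gs n x) < \<epsilon>"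
      by (rule choice[THEN exE])
    then have gs: "\<And>n. gs n \<in> G" "\<And>n. L1norm M (\<lambda>x. K (fn n) x - gs n x) < \<epsilon>" by (simp add: gs0) (simp add: gs0)
    have "\<not> inj gs"
    proof
      assume "inj gs"
      have "range gs \<subseteq> G" using gs(1) by (intro image_subsetI)
      then have "finite (range gs)" using G(1) by (rule finite_subset)
      then have "finite (UNIV :: nat set)" using \<open>inj gs\<close> by (rule finite_imageD)
      then show False by simp
    qed
    then have "\<exists>n m. n \<noteq> m \<and> gs n = gs m" unfolding inj_on_def by auto
    then obtain n m where nm: "n \<noteq> m" "gs n = gs m" by (elim exE conjE)
    define g where "g = gs n"
    have gi: "integrable M g" using G(2) gs(1) g_def by auto
    have Kdiff: "L1norm M (\<lambda>x. K (fn n) x - K (fn m) x) < 2 * \<epsilon>"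
    proof -
      have "L1norm M (\<lambda>x. K (fn n) x - K (fn m) x) =
            L1norm M (\<lambda>x. (K (fn n) x - g x) - (K (fn m) x - g x))" by simp
      also have "\<dots> \<le> L1norm M (\<lambda>x. K (fn n) x - g x) + L1norm M (\<lambda>x. K (fn m) x - g x)"
        using Ki[OF fn_int] gi by (intro L1norm_diff_le) auto
      also have "\<dots> < 2 * \<epsilon>" using gs(2)[of n] gs(2)[of m] nm(2) g_def by simp
      finally show ?thesis .
    qed
    define h where "h = (\<lambda>y. (1/2) * (fn n y + (-1) * fn m y))"
    have hi: "integrable M h" unfolding h_def using fn_int by auto
    have hm[measurable]: "h \<in> borel_measurable M" using hi by auto
    have hnorm: "L1norm M h \<le> 1"
    proof -
      have "L1norm M h = (1/2) * L1norm M (\<lambda>y. fn n y + (-1) * fn m y)"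
        unfolding h_def by (subst L1norm_cmult) simp
      also have "\<dots> \<le> (1/2) * (L1norm M (fn n) + L1norm M (\<lambda>y. (-1) * fn m y))"
        using fn_int by (intro mult_left_mono L1norm_add_le) auto
      also have "\<dots> = 1" using fn_norm L1norm_cmult[of M "-1" "fn m"] by simp
      finally show ?thesis .
    qed
    have Kh: "AE x in M. K h x = (1/2) * (K (fn n) x - K (fn m) x)"
    proof -
      have 1: "AE x in M. K h x = (1/2) * K (\<lambda>y. fn n y + (-1) * fn m y) x"
        unfolding h_def using fn_int by (intro Kmult) auto
      have 2: "AE x in M. K (\<lambda>y. fn n y + (-1) * fn m y) x = K (fn n) x + K (\<lambda>y. (-1) * fn m y) x"
        using fn_int by (intro Kadd) auto
      have 3: "AE x in M. K (\<lambda>y. (-1) * fn m y) x = (-1) * K (fn m) x"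
        using fn_int by (intro Kmult) auto
      from 1 2 3 show ?thesis by eventually_elim simp
    qed
    have Khm: "K h \<in> borel_measurable M" using Ki[OF hi] by auto
    have Knm[measurable]: "K (fn k) \<in> borel_measurable M" for k using Ki[OF fn_int] by auto
    have Khnorm: "L1norm M (K h) < \<epsilon>"
    proof -
      have "L1norm M (K h) = L1norm M (\<lambda>x. (1/2) * (K (fn n) x - K (fn m) x))"
        using Kh Khm by (intro L1norm_cong_AE) auto
      also have "\<dots> = (1/2) * L1norm M (\<lambda>x. K (fn n) x - K (fn m) x)"
        by (subst L1norm_cmult) simp
      also have "\<dots> < \<epsilon>" using Kdiff by simp
      finally show ?thesis .
    qed
    have uhi: "integrable M (\<lambda>x. u x * h x)" using int_mult[OF u ub hi] by simp
    have uf_int: "integrable M (\<lambda>x. u x * fn k x)" for k using int_mult[OF u ub fn_int] by simp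
    have uhnorm: "c \<le> L1norm M (\<lambda>x. u x * h x)"
    proof -
      have "AE x in M. (1/2) * (c * fn n x + c * fn m x) \<le> \<bar>u x * h x\<bar>"
        using Ac[of n] Ac[of m]
      proof eventually_elim
        case (elim x)
        have d: "x \<in> A n \<Longrightarrow> x \<notin> A m" using disj nm(1) unfolding disjoint_family_on_def by blast
        show ?case
        proof (cases "x \<in> A n")
          case True
          then have "x \<notin> A m" using d by auto
          then have "fn n x = 1 / \<beta> n" "fn m x = 0" using True by (simp_all add: fn_def)
          then show ?thesis using aux_ineq1[OF \<beta>pos[of n] elim(1)[rule_format, OF True]]
            unfolding h_def by simp
        next
          case False
          show ?thesis
          proof (cases "x \<in> A m")
            case True
            then have "fn m x = 1 / \<beta> m" "fn n x = 0" using False by (simp_all add: fn_def)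
            then show ?thesis using aux_ineq2[OF \<beta>pos[of m] elim(2)[rule_format, OF True]]
              unfolding h_def by simp
          next
            case False2: False
            then have "fn m x = 0" "fn n x = 0" using False by (simp_all add: fn_def)
            then show ?thesis by simp
          qed
        qed
      qed
      then have "integral\<^sup>L M (\<lambda>x. (1/2) * (c * fn n x + c * fn m x)) \<le> L1norm M (\<lambda>x. u x * h x)"
        unfolding L1norm_def using fn_int integrable_abs[OF uhi] by (intro integral_mono_AE) simp_all
      moreover have "integral\<^sup>L M (\<lambda>x. (1/2) * (c * fn n x + c * fn m x)) = c"
        using fn_int fn_integral by (simp add: Bochner_Integration.integral_add)
      ultimately show ?thesis by simp
    qed
    have "L1norm M (\<lambda>x. u x * h x) = L1norm M (\<lambda>x. (u x * h x + K h x) - K h x)" by simp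
    also have "\<dots> \<le> L1norm M (\<lambda>x. u x * h x + K h x) + L1norm M (K h)"
      using uhi Ki[OF hi] by (intro L1norm_diff_le) auto
    finally have "c - \<epsilon> \<le> L1norm M (\<lambda>x. u x * h x + K h x)" using uhnorm Khnorm by simp
    also have "\<dots> \<le> Sup ?S"
      using hi hnorm by (intro cSup_upper[OF _ bdd]) (auto simp: mult_op_def)
    finally show "c \<le> L1_opnorm M (\<lambda>f x. mult_op u f x + K f x) + \<epsilon>"
      unfolding L1_opnorm_def by simp
  qed
qed

lemma diffuse_split:
  assumes dif: "diffuse_on M D" and A0: "A0 \<in> sets M" "A0 \<subseteq> D" "0 < emeasure M A0"
  shows "\<exists>A::nat \<Rightarrow> 'a set. disjoint_family A \<and> (\<forall>n. A n \<in> sets M \<and> A n \<subseteq> A0 \<and> 0 < emeasure M (A n))"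
proof -
  define P where "P R \<longleftrightarrow> R \<in> sets M \<and> R \<subseteq> A0 \<and> 0 < emeasure M R" for R
  define Q where "Q R A' \<longleftrightarrow> A' \<in> sets M \<and> A' \<subseteq> R \<and> 0 < emeasure M A' \<and> emeasure M A' < emeasure M R" for R A'
  define sp where "sp R = (SOME A'. Q R A')" for R
  have spP: "Q R (sp R)" if "P R" for R
    unfolding sp_def
  proof (rule someI_ex)
    have "R \<in> sets M" "R \<subseteq> D" "0 < emeasure M R" using that A0 unfolding P_def by auto
    then show "\<exists>A'. Q R A'" using dif unfolding diffuse_on_def Q_def by blast
  qed
  have stepP: "P (R - sp R)" if "P R" for R
  proof -
    have q: "Q R (sp R)" using spP[OF that] .
    have "emeasure M (R - sp R) = emeasure M R - emeasure M (sp R)"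
      using q that unfolding Q_def P_def by (intro emeasure_Diff) (auto simp: less_top[symmetric] dest: order.strict_trans2[OF _ top_greatest])
    also have "\<dots> > 0" using q unfolding Q_def by (intro diff_gr0_ennreal) auto
    finally show ?thesis using q that unfolding P_def Q_def by auto
  qed
  define R where "R n = ((\<lambda>R. R - sp R) ^^ n) A0" for n
  have RS: "R (Suc n) = R n - sp (R n)" for n unfolding R_def by simp
  have PR: "P (R n)" for n
  proof (induction n)
    case 0
    then show ?case unfolding R_def P_def using A0 by auto
  next
    case (Suc n)
    then show ?case unfolding RS by (rule stepP)
  qed
  have dec: "R m \<subseteq> R n" if "n \<le> m" for n m
  proof -
    have "antimono_on UNIV R" by (rule decseq_SucI) (auto simp: RS)
    then show ?thesis using that by (rule decseqD)
  qed
  define A where "A n = sp (R n)" for n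
  have QA: "Q (R n) (A n)" for n unfolding A_def using spP[OF PR] .
  have disj: "A n \<inter> A m = {}" if "n < m" for n m
  proof -
    have "A m \<subseteq> R m" using QA[of m] unfolding Q_def by auto
    also have "\<dots> \<subseteq> R (Suc n)" using dec that by auto
    also have "\<dots> = R n - A n" unfolding RS A_def ..
    finally show ?thesis by auto
  qed
  have "disjoint_family A"
    unfolding disjoint_family_on_def
  proof (intro ballI impI)
    fix m n :: nat assume "m \<noteq> n"
    then consider "m < n" | "n < m" by linarith
    then show "A m \<inter> A n = {}" using disj by cases (auto simp: Int_commute)
  qed
  moreover have "\<forall>n. A n \<in> sets M \<and> A n \<subseteq> A0 \<and> 0 < emeasure M (A n)"
    using QA PR unfolding Q_def P_def by blast
  ultimately show ?thesis by blast
qed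

lemma upper_K:
  fixes u :: "'a \<Rightarrow> real" and B :: "nat \<Rightarrow> 'a set" and N :: nat
  assumes u[measurable]: "u \<in> borel_measurable M" and ub: "AE x in M. \<bar>u x\<bar> \<le> Cu"
    and at: "\<And>n. is_atom M (B n)" and fin: "\<And>n. emeasure M (B n) < \<infinity>"
    and disj: "disjoint_family B"
    and bound: "AE x in M. (\<forall>n<N. x \<notin> B n) \<longrightarrow> \<bar>u x\<bar> \<le> r" and r: "0 \<le> r"
  shows "\<exists>K. compact_L1_operator M K \<and> L1_opnorm M (\<lambda>f x. mult_op u f x + K f x) \<le> r"
proof -
  have Bs[measurable]: "B n \<in> sets M" for n using at[of n] unfolding is_atom_def by simp
  define F where "F = (\<Union>n\<in>{..<N}. B n)"
  have Fs[measurable]: "F \<in> sets M" unfolding F_def by auto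
  define K where "K f x = - (indicator F x * u x * f x)" for f :: "'a \<Rightarrow> real" and x
  define Kn where "Kn n f x = - (indicator (B n) x * u x * f x)" for n and f :: "'a \<Rightarrow> real" and x
  have indF: "indicator F x = (\<Sum>n<N. indicator (B n) x :: real)" for x
    unfolding F_def using disj by (intro indicator_UN_disjoint) (auto simp: disjoint_family_on_def)
  have K_sum: "K = (\<lambda>f x. \<Sum>n<N. Kn n f x)"
    by (intro ext) (simp only: K_def Kn_def indF sum_distrib_right sum_negf[symmetric])
  have mF: "(\<lambda>x. indicator F x * u x) \<in> borel_measurable M" by measurable
  have bF: "AE x in M. \<bar>indicator F x * u x\<bar> \<le> Cu"
    using ub by eventually_elim (auto simp: indicator_def)
  have K_int: "integrable M (K f)" if "integrable M f" for f
    unfolding K_def using int_mult(1)[OF mF bF that] by simp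
  have K_bd: "L1norm M (K f) \<le> max 0 Cu * L1norm M f" if "integrable M f" for f
  proof -
    have "L1norm M (K f) = L1norm M (\<lambda>x. indicator F x * u x * f x)"
      unfolding K_def L1norm_def by simp
    also have "\<dots> \<le> max 0 Cu * L1norm M f" by (rule int_mult(2)[OF mF bF that])
    finally show ?thesis .
  qed
  have mB: "(\<lambda>x. indicator (B n) x * u x) \<in> borel_measurable M" for n by measurable
  have bB: "AE x in M. \<bar>indicator (B n) x * u x\<bar> \<le> Cu" for n
    using ub by eventually_elim (auto simp: indicator_def)
  have Kn_int: "integrable M (Kn n f)" if "integrable M f" for n f
    unfolding Kn_def using int_mult(1)[OF mB bB that] by simp
  have TBK: "TB M K"
    unfolding K_sum
  proof (rule TB_sum)
    show "TB M (Kn n)" for n unfolding Kn_def by (rule TB_atom[OF at fin u])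
    show "integrable M (Kn n f)" if "integrable M f" for n f using Kn_int[OF that] .
  qed
  have KL: "L1_operator M K"
    unfolding L1_operator_def
  proof (intro conjI allI impI)
    show "integrable M (K f)" if "integrable M f" for f using K_int[OF that] .
    show "AE x in M. K f x = K g x" if "AE x in M. f x = g x" for f g
      using that by eventually_elim (simp add: K_def)
    show "AE x in M. K (\<lambda>y. f y + g y) x = K f x + K g x" for f g
      by (simp add: K_def algebra_simps)
    show "AE x in M. K (\<lambda>y. c * f y) x = c * K f x" for c f
      by (simp add: K_def algebra_simps)
    show "\<exists>C. \<forall>f. integrable M f \<longrightarrow> L1norm M (K f) \<le> C * L1norm M f"
      using K_bd by blast
  qed
  have cK: "compact_L1_operator M K"
    unfolding compact_L1_operator_def using KL TBK unfolding TB_def by simp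
  have "L1_opnorm M (\<lambda>f x. mult_op u f x + K f x) \<le> r"
    unfolding L1_opnorm_def
  proof (rule cSup_least)
    show "{L1norm M ((\<lambda>f x. mult_op u f x + K f x) f) | f. integrable M f \<and> L1norm M f \<le> 1} \<noteq> {}"
    proof -
      have "L1norm M ((\<lambda>f x. mult_op u f x + K f x) (\<lambda>x. 0)) \<in>
        {L1norm M ((\<lambda>f x. mult_op u f x + K f x) f) | f. integrable M f \<and> L1norm M f \<le> 1}"
        by (intro CollectI exI[of _ "\<lambda>x. 0"]) (simp add: L1norm_def)
      then show ?thesis by blast
    qed
  next
    fix y assume "y \<in> {L1norm M ((\<lambda>f x. mult_op u f x + K f x) f) | f. integrable M f \<and> L1norm M f \<le> 1}"
    then obtain f where f: "integrable M f" "L1norm M f \<le> 1" and y: "y = L1norm M (\<lambda>x. u x * f x + K f x)"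
      unfolding mult_op_def by auto
    have i1: "integrable M (\<lambda>x. u x * f x + K f x)"
      using int_mult(1)[OF u ub f(1)] K_int[OF f(1)] by (rule Bochner_Integration.integrable_add)
    have i2: "integrable M (\<lambda>x. r * \<bar>f x\<bar>)" using f(1) by simp
    have "AE x in M. \<bar>u x * f x + K f x\<bar> \<le> r * \<bar>f x\<bar>"
      using bound
    proof eventually_elim
      case (elim x)
      show ?case
      proof (cases "x \<in> F")
        case True
        then show ?thesis using r by (simp add: K_def)
      next
        case False
        then have "\<forall>n<N. x \<notin> B n" unfolding F_def by auto
        then have "\<bar>u x\<bar> \<le> r" using elim by simp
        then show ?thesis using False by (simp add: K_def abs_mult mult_right_mono)
      qed
    qed
    then have "y \<le> integral\<^sup>L M (\<lambda>x. r * \<bar>f x\<bar>)"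
      unfolding y L1norm_def by (intro integral_mono_AE[OF integrable_abs[OF i1] i2])
    also have "\<dots> = r * L1norm M f" unfolding L1norm_def by (rule integral_mult_right_zero)
    also have "\<dots> \<le> r * 1" using f(2) r by (intro mult_left_mono)
    finally show "y \<le> r" by simp
  qed
  then show ?thesis using cK by blast
qed

lemma pos_finite_subset:
  assumes sf: "sigma_finite_measure M" and S: "S \<in> sets M" "0 < emeasure M S"
  shows "\<exists>S'. S' \<in> sets M \<and> S' \<subseteq> S \<and> 0 < emeasure M S' \<and> emeasure M S' < \<infinity>"
proof -
  from sigma_finite_measure.sigma_finite_countable[OF sf] obtain A where
    A: "countable A" "A \<subseteq> sets M" "\<Union>A = space M" "\<forall>a\<in>A. emeasure M a \<noteq> \<infinity>" by blast
  have SA: "S = (\<Union>a\<in>A. S \<inter> a)" using A(3) sets.sets_into_space[OF S(1)] by auto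
  show ?thesis
  proof (cases "\<exists>a\<in>A. emeasure M (S \<inter> a) \<noteq> 0")
    case True
    then obtain a where a: "a \<in> A" "emeasure M (S \<inter> a) \<noteq> 0" by blast
    have Sa: "S \<inter> a \<in> sets M" using a A(2) S by auto
    have "emeasure M (S \<inter> a) \<le> emeasure M a"
      using a A(2) by (intro emeasure_mono) auto
    moreover have "emeasure M a < \<infinity>" using A(4) a(1) by (simp add: less_top)
    ultimately have "emeasure M (S \<inter> a) < \<infinity>" by (metis order.strict_trans1)
    then show ?thesis using Sa a(2) by (intro exI[of _ "S \<inter> a"]) (auto simp: zero_less_iff_neq_zero)
  next
    case False
    then have "(\<Union>a\<in>A. S \<inter> a) \<in> null_sets M"
      using A S by (intro null_sets_UN') auto
    then have "emeasure M S = 0" using SA by (metis null_setsD1)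
    then show ?thesis using S(2) by simp
  qed
qed

lemma opnorm_nonneg:
  fixes u :: "'a \<Rightarrow> real"
  assumes u: "u \<in> borel_measurable M" and ub: "AE x in M. \<bar>u x\<bar> \<le> C" and K: "L1_operator M K"
  shows "0 \<le> L1_opnorm M (\<lambda>f x. mult_op u f x + K f x)"
proof -
  have "L1norm M ((\<lambda>f x. mult_op u f x + K f x) (\<lambda>x. 0)) \<in>
    {L1norm M ((\<lambda>f x. mult_op u f x + K f x) f) | f. integrable M f \<and> L1norm M f \<le> 1}"
    by (intro CollectI exI[of _ "\<lambda>x. 0"]) (simp add: L1norm_def)
  then have "L1norm M ((\<lambda>f x. mult_op u f x + K f x) (\<lambda>x. 0)) \<le> L1_opnorm M (\<lambda>f x. mult_op u f x + K f x)"
    unfolding L1_opnorm_def by (rule cSup_upper[OF _ opnorm_bdd[OF u ub K]])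
  then show ?thesis using L1norm_nonneg order.trans by blast
qed

theorem theorem2p1:
  fixes M :: "'a measure" and Dd Da :: "'a set" and B :: "nat \<Rightarrow> 'a set"
    and u :: "'a \<Rightarrow> real"
  assumes "sigma_finite_measure M"
    and "Dd \<in> sets M" and "Da \<in> sets M"
    and "Dd \<inter> Da = {}" and "Dd \<union> Da = space M"
    and "diffuse_on M Dd"
    and "Da = (\<Union>n. B n)" and "disjoint_family B" and "\<And>n. is_atom M (B n)"
    and "u \<in> borel_measurable M" and "\<exists>C. AE x in M. \<bar>u x\<bar> \<le> C"
  shows "ereal (L1_essnorm M (mult_op u)) =
           max (Linf_norm_on M Dd u)
               (limsup (\<lambda>n. ereal \<bar>atom_val M u (B n)\<bar>))"
proof -
  note sf = assms(1) and Dds[measurable] = assms(2) and Das = assms(3) and DdDa = assms(4)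
    and sp = assms(5) and dif = assms(6) and DaB = assms(7) and disj = assms(8)
    and at = assms(9) and u[measurable] = assms(10)
  obtain C where ub: "AE x in M. \<bar>u x\<bar> \<le> C" using assms(11) by blast
  define C' where "C' = max 0 C"
  have ub': "AE x in M. \<bar>u x\<bar> \<le> C'" using ub by eventually_elim (simp add: C'_def)
  have C'0: "0 \<le> C'" unfolding C'_def by simp
  have Bs[measurable]: "B n \<in> sets M" for n using at[of n] unfolding is_atom_def by simp
  have atfin: "emeasure M (B n) < \<infinity>" for n by (rule atom_finite[OF sf at])
  define v where "v n = atom_val M u (B n)" for n
  have uv: "AE x in M. x \<in> B n \<longrightarrow> u x = v n" for n
    unfolding v_def by (rule atom_val_AE[OF at atfin u])
  have vb: "\<bar>v n\<bar> \<le> C'" for n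
  proof (cases "emeasure M (B n) = 0")
    case True
    then show ?thesis using C'0 by (simp add: v_def atom_val_def)
  next
    case False
    show ?thesis
    proof (rule ccontr)
      assume nv: "\<not> \<bar>v n\<bar> \<le> C'"
      have "AE x in M. x \<notin> B n" using uv[of n] ub' by eventually_elim (use nv in auto)
      then have "B n \<in> null_sets M" using AE_iff_null_sets[OF Bs[of n]] by simp
      then show False using False by (simp add: null_setsD1)
    qed
  qed
  have Ddsp: "Dd \<subseteq> space M" using sp by auto
  let ?RM = "restrict_space M Dd"
  have Dd_int: "Dd \<inter> space M \<in> sets M" using Ddsp by (simp add: Int_absorb2)
  have um: "(\<lambda>x. ereal \<bar>u x\<bar>) \<in> borel_measurable ?RM"
    by (intro measurable_restrict_space1) simp
  define es where "es = esssup ?RM (\<lambda>x. ereal \<bar>u x\<bar>)"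
  have a_def': "Linf_norm_on M Dd u = max 0 es" unfolding Linf_norm_on_def es_def ..
  have es_le: "es \<le> ereal C'"
    unfolding es_def
  proof (rule esssup_I[OF um])
    show "AE x in ?RM. ereal \<bar>u x\<bar> \<le> ereal C'"
      unfolding AE_restrict_space_iff[OF Dd_int] using ub' by eventually_elim auto
  qed
  define a where "a = Linf_norm_on M Dd u"
  define b where "b = limsup (\<lambda>n. ereal \<bar>v n\<bar>)"
  have a0: "0 \<le> a" unfolding a_def a_def' by simp
  have aC: "a \<le> ereal C'" unfolding a_def a_def' using es_le C'0 by simp
  have bC: "b \<le> ereal C'" unfolding b_def using vb by (intro Limsup_bounded) auto
  have b0: "0 \<le> b"
  proof -
    have "0 \<le> liminf (\<lambda>n. ereal \<bar>v n\<bar>)" by (intro Liminf_bounded) auto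
    also have "\<dots> \<le> b" unfolding b_def by (rule Liminf_le_Limsup) simp
    finally show ?thesis .
  qed
  define ra where "ra = real_of_ereal a"
  define rb where "rb = real_of_ereal b"
  have a_eq: "a = ereal ra" unfolding ra_def using a0 aC by (cases a) auto
  have b_eq: "b = ereal rb" unfolding rb_def using b0 bC by (cases b) auto
  define r where "r = max ra rb"
  have r0: "0 \<le> r" unfolding r_def using a0 a_eq by auto
  have lower: "r \<le> L1_opnorm M (\<lambda>f x. mult_op u f x + K f x)" if K: "compact_L1_operator M K" for K
  proof -
    have KL: "L1_operator M K" using K unfolding compact_L1_operator_def by simp
    have on0: "0 \<le> L1_opnorm M (\<lambda>f x. mult_op u f x + K f x)" by (rule opnorm_nonneg[OF u ub' KL])
    have la: "ra \<le> L1_opnorm M (\<lambda>f x. mult_op u f x + K f x)"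
    proof (rule field_le_epsilon)
      fix e :: real assume e: "0 < e"
      show "ra \<le> L1_opnorm M (\<lambda>f x. mult_op u f x + K f x) + e"
      proof (cases "ra - e \<le> 0")
        case True
        then show ?thesis using on0 by linarith
      next
        case False
        define c where "c = ra - e"
        have c0: "0 < c" using False c_def by simp
        have "ereal c < es"
        proof -
          have "ereal c < a" using a_eq c_def e by simp
          then have "ereal c < max 0 es" unfolding a_def a_def' .
          then show ?thesis using c0 by (auto simp: max_def split: if_splits)
        qed
        then have pos: "0 < emeasure ?RM {x \<in> space ?RM. ereal c < ereal \<bar>u x\<bar>}"
          unfolding es_def by (rule esssup_pos_measure[OF um])
        define S where "S = {x \<in> space M. c < \<bar>u x\<bar>} \<inter> Dd"
        have Ss: "S \<in> sets M" unfolding S_def by measurable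
        have SDd: "S \<subseteq> Dd" unfolding S_def by auto
        have "{x \<in> space ?RM. ereal c < ereal \<bar>u x\<bar>} = S"
          unfolding S_def space_restrict_space using Ddsp by auto
        then have "0 < emeasure M S" using pos emeasure_restrict_space[OF Dd_int SDd] by simp
        then obtain S' where S': "S' \<in> sets M" "S' \<subseteq> S" "0 < emeasure M S'" "emeasure M S' < \<infinity>"
          using pos_finite_subset[OF sf Ss] by blast
        have "S' \<subseteq> Dd" using S'(2) SDd by simp
        then obtain A :: "nat \<Rightarrow> 'a set" where A: "disjoint_family A"
          "\<forall>n. A n \<in> sets M \<and> A n \<subseteq> S' \<and> 0 < emeasure M (A n)"
          using diffuse_split[OF dif S'(1) _ S'(3)] by blast
        have As: "A n \<in> sets M" for n using A(2) by simp
        have Apos: "0 < emeasure M (A n)" for n using A(2) by simp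
        have AS: "A n \<subseteq> S" for n using A(2) S'(2) by blast
        have Afin: "emeasure M (A n) < \<infinity>" for n
        proof -
          have "emeasure M (A n) \<le> emeasure M S'" using A(2) S'(1) by (intro emeasure_mono) auto
          then show ?thesis using S'(4) by (metis order.strict_trans1)
        qed
        have Ac: "AE x in M. x \<in> A n \<longrightarrow> c \<le> \<bar>u x\<bar>" for n
        proof (rule AE_I2)
          fix x assume "x \<in> space M"
          show "x \<in> A n \<longrightarrow> c \<le> \<bar>u x\<bar>"
          proof
            assume "x \<in> A n"
            then have "x \<in> S" using AS[of n] by blast
            then show "c \<le> \<bar>u x\<bar>" unfolding S_def by simp
          qed
        qed
        have "c \<le> L1_opnorm M (\<lambda>f x. mult_op u f x + K f x)"
          by (rule lower_bound[OF u ub' As A(1) Apos Afin Ac K])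
        then show ?thesis unfolding c_def by simp
      qed
    qed
    have lb: "rb \<le> L1_opnorm M (\<lambda>f x. mult_op u f x + K f x)"
    proof (rule field_le_epsilon)
      fix e :: real assume e: "0 < e"
      show "rb \<le> L1_opnorm M (\<lambda>f x. mult_op u f x + K f x) + e"
      proof (cases "rb - e \<le> 0")
        case True
        then show ?thesis using on0 by linarith
      next
        case False
        define c where "c = rb - e"
        have c0: "0 < c" using False c_def by simp
        define I where "I = {n. c < \<bar>v n\<bar>}"
        have infI: "infinite I"
        proof
          assume "finite I"
          then obtain k where k: "I \<subseteq> {..<k}" using finite_nat_bounded by blast
          have "\<bar>v n\<bar> \<le> c" if "k \<le> n" for n
          proof (rule ccontr)
            assume "\<not> \<bar>v n\<bar> \<le> c"
            then have "n \<in> I" unfolding I_def by simp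
            then show False using k that by auto
          qed
          then have "\<forall>\<^sub>F n in sequentially. ereal \<bar>v n\<bar> \<le> ereal c"
            by (intro eventually_sequentiallyI[of k]) simp
          then have "b \<le> ereal c" unfolding b_def by (rule Limsup_bounded)
          then show False using b_eq c_def e by simp
        qed
        define en where "en = enumerate I"
        have sm: "strict_mono en" unfolding en_def by (rule strict_mono_enumerate[OF infI])
        have inj: "inj en" using sm by (rule strict_mono_imp_inj_on)
        have enI: "c < \<bar>v (en k)\<bar>" for k
          using enumerate_in_set[OF infI, of k] unfolding en_def I_def by simp
        define A where "A k = B (en k)" for k
        have As: "A k \<in> sets M" for k unfolding A_def by simp
        have Adisj: "disjoint_family A"
          unfolding disjoint_family_on_def
        proof (intro ballI impI)
          fix m n :: nat assume "m \<noteq> n"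
          then have "en m \<noteq> en n" using inj unfolding inj_on_def by blast
          then show "A m \<inter> A n = {}" unfolding A_def using disj unfolding disjoint_family_on_def by blast
        qed
        have Apos: "0 < emeasure M (A k)" for k
        proof (rule ccontr)
          assume "\<not> 0 < emeasure M (A k)"
          then have "emeasure M (B (en k)) = 0" unfolding A_def by (simp add: zero_less_iff_neq_zero)
          then have "v (en k) = 0" unfolding v_def atom_val_def by simp
          then show False using enI[of k] c0 by simp
        qed
        have Afin: "emeasure M (A k) < \<infinity>" for k unfolding A_def by (rule atfin)
        have Ac: "AE x in M. x \<in> A k \<longrightarrow> c \<le> \<bar>u x\<bar>" for k
          using uv[of "en k"] by eventually_elim (use enI[of k] in \<open>auto simp: A_def\<close>)
        have "c \<le> L1_opnorm M (\<lambda>f x. mult_op u f x + K f x)"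
          by (rule lower_bound[OF u ub' As Adisj Apos Afin Ac K])
        then show ?thesis unfolding c_def by simp
      qed
    qed
    show ?thesis unfolding r_def using la lb by simp
  qed
  have upper: "\<exists>K. compact_L1_operator M K \<and> L1_opnorm M (\<lambda>f x. mult_op u f x + K f x) \<le> r + e"
    if e: "0 < e" for e
  proof -
    have "b < ereal (rb + e)" using b_eq e by simp
    then have "\<forall>\<^sub>F n in sequentially. ereal \<bar>v n\<bar> < ereal (rb + e)" unfolding b_def by (rule Limsup_lessD)
    then obtain N where N: "\<And>n. N \<le> n \<Longrightarrow> ereal \<bar>v n\<bar> < ereal (rb + e)"
      unfolding eventually_sequentially by blast
    have AEDd: "AE x in M. x \<in> Dd \<longrightarrow> \<bar>u x\<bar> \<le> ra"
    proof -
      have "AE x in ?RM. ereal \<bar>u x\<bar> \<le> es" unfolding es_def by (rule esssup_AE)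
      then have 1: "AE x in M. x \<in> Dd \<longrightarrow> ereal \<bar>u x\<bar> \<le> es" unfolding AE_restrict_space_iff[OF Dd_int] .
      have "max 0 es = ereal ra" using a_eq unfolding a_def a_def' .
      then have 2: "es \<le> ereal ra" by (metis max.cobounded2)
      from 1 show ?thesis
      proof eventually_elim
        case (elim x)
        show ?case
        proof
          assume "x \<in> Dd"
          then have "ereal \<bar>u x\<bar> \<le> ereal ra" using elim 2 by (metis order.trans)
          then show "\<bar>u x\<bar> \<le> ra" by simp
        qed
      qed
    qed
    have AEB: "AE x in M. \<forall>n. x \<in> B n \<longrightarrow> u x = v n"
      by (rule AE_all_countable[THEN iffD2]) (rule allI, rule uv)
    have rar: "ra \<le> r" "rb \<le> r" unfolding r_def by simp_all
    have bound: "AE x in M. (\<forall>n<N. x \<notin> B n) \<longrightarrow> \<bar>u x\<bar> \<le> r + e"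
      using AEDd AEB AE_space
    proof eventually_elim
      case (elim x)
      show ?case
      proof
        assume nB: "\<forall>n<N. x \<notin> B n"
        have "x \<in> Dd \<or> (\<exists>n. x \<in> B n)" using elim(3) sp DaB by auto
        then show "\<bar>u x\<bar> \<le> r + e"
        proof
          assume "x \<in> Dd"
          then have "\<bar>u x\<bar> \<le> ra" using elim(1) by simp
          then show ?thesis using e rar by linarith
        next
          assume "\<exists>n. x \<in> B n"
          then obtain n where xn: "x \<in> B n" by blast
          with nB have "N \<le> n" by (meson not_le)
          then have "ereal \<bar>v n\<bar> < ereal (rb + e)" by (rule N)
          then have "\<bar>v n\<bar> < rb + e" by simp
          moreover have "u x = v n" using elim(2) xn by simp
          ultimately show ?thesis using rar by linarith
        qed
      qed
    qed
    have "0 \<le> r + e" using r0 e by simp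
    then show ?thesis using upper_K[OF u ub' at atfin disj bound] by simp
  qed
  define T where "T = {L1_opnorm M (\<lambda>f x. mult_op u f x + K f x) | K. compact_L1_operator M K}"
  have ess: "L1_essnorm M (mult_op u) = Inf T"
    unfolding L1_essnorm_def T_def ..
  have Tne: "T \<noteq> {}" using upper[of 1] unfolding T_def by auto
  have Tlow: "r \<le> t" if "t \<in> T" for t using that lower unfolding T_def by auto
  have bddT: "bdd_below T" using Tlow unfolding bdd_below_def by blast
  have "r \<le> Inf T" using Tne Tlow by (rule cInf_greatest)
  moreover have "Inf T \<le> r"
  proof (rule field_le_epsilon)
    fix e :: real assume "0 < e"
    then obtain K where K: "compact_L1_operator M K" "L1_opnorm M (\<lambda>f x. mult_op u f x + K f x) \<le> r + e"
      using upper by blast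
    then have "L1_opnorm M (\<lambda>f x. mult_op u f x + K f x) \<in> T" unfolding T_def by blast
    then have "Inf T \<le> L1_opnorm M (\<lambda>f x. mult_op u f x + K f x)" using bddT by (rule cInf_lower)
    then show "Inf T \<le> r + e" using K(2) by linarith
  qed
  ultimately have "L1_essnorm M (mult_op u) = r" using ess by linarith
  moreover have "max (Linf_norm_on M Dd u) (limsup (\<lambda>n. ereal \<bar>atom_val M u (B n)\<bar>)) = ereal r"
    using a_eq b_eq unfolding a_def b_def v_def r_def by simp
  ultimately show ?thesis by simp
qed

end
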